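(* Let $\mathcal{Q}$ be a small Cauchy-bilateral quantaloid. Then the Cauchy completion $\mathbb{A}_{\mathsf{cc}}$ of every symmetric $\mathcal{Q}$-category $\mathbb{A}$ is symmetric, and the symmetrisation $\mathbb{C}_{\mathsf s}$ of every Cauchy complete $\mathcal{Q}$-category $\mathbb{C}$ is Cauchy complete. (That is, Cauchy completion restricts to an endofunctor of $\mathsf{SymCat}(\mathcal{Q})$ and symmetrisation restricts to an endofunctor of the full subcategory of Cauchy complete $\mathcal{Q}$-categories.)
   Context: A quantaloid is a category enriched in $\mathsf{Sup}$ (complete lattices and supremum-preserving maps). An involution on $\mathcal{Q}$ is an assignment $f\mapsto f^{\mathsf o}$ on morphisms, identity on objects, sending $f\colon X\to Y$ to $f^{\mathsf o}\colon Y\to X$, monotone, with $(g\circ f)^{\mathsf o}=f^{\mathsf o}\circ g^{\mathsf o}$ and $f^{\mathsf{oo}}=f$. $\mathcal{Q}$ is Cauchy-bilateral if it is involutive and for every object $X$ and every family $(f_i\colon X\to X_i,\ g_i\colon X_i\to X)_{i\in I}$ of morphisms: if $f_k\circ g_j\circ f_j\le f_k$ and $g_j\circ f_j\circ g_k\le g_k$ for all $j,k\in I$ and $1_X\le\bigvee_i g_i\circ f_i$, then $1_X\le\bigvee_i(g_i\wedge f_i^{\mathsf o})\circ(g_i^{\mathsf o}\wedge f_i)$. A $\mathcal{Q}$-category $\mathbb{A}$: a set $\mathbb{A}_0$ of objects with types $tx\in\mathcal{Q}_0$ and homs $\mathbb{A}(y,x)\colon tx\to ty$ with $\mathbb{A}(z,y)\circ\mathbb{A}(y,x)\le\mathbb{A}(z,x)$,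 $1_{tx}\le\mathbb{A}(x,x)$. Functors $F\colon\mathbb{A}\to\mathbb{B}$: type-preserving object maps with $\mathbb{A}(y,x)\le\mathbb{B}(Fy,Fx)$. $\mathbb{A}$ is symmetric if $\mathbb{A}(x,y)=\mathbb{A}(y,x)^{\mathsf o}$. The symmetrisation $\mathbb{A}_{\mathsf s}$ has the same objects and $\mathbb{A}_{\mathsf s}(y,x)=\mathbb{A}(y,x)\wedge\mathbb{A}(x,y)^{\mathsf o}$. A distributor $\Phi\colon\mathbb{A}\to\mathbb{B}$: arrows $\Phi(y,x)\colon tx\to ty$ with $\mathbb{B}(y',y)\circ\Phi(y,x)\le\Phi(y',x)$, $\Phi(y,x)\circ\mathbb{A}(x,x')\le\Phi(y,x')$; composition $(\Psi\otimes\Phi)(z,x)=\bigvee_y\Psi(z,y)\circ\Phi(y,x)$, identities $\mathbb{A}(-,-)$, elementwise order. $\Phi$ is a left adjoint with right adjoint $\Phi^*$ if $\mathbb{A}\le\Phi^*\otimes\Phi$ and $\Phi\otimes\Phi^*\le\mathbb{B}$. $*_X$ is the one-object $\mathcal{Q}$-category of type $X$ with hom $1_X$; a presheaf on $\mathbb{A}$ is a distributor $*_X\to\mathbb{A}$, and it is representable if it equals $\mathbb{A}(-,a)$ for some $a$ of type $X$. $\mathbb{A}$ is Cauchy complete if every left adjoint presheaf on it is representable. The Cauchy completion $\mathbb{A}_{\mathsf{cc}}$ has objects the left adjoint presheaves $\phi\colon *_X\to\mathbb{A}$ (type $X$) and hom $\mathbb{A}_{\mathsf{cc}}(\psi,\phi)$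 the unique element of $\psi^*\otimes\phi$. *)

theory Defs
  imports Main
begin

text \<open>A small quantaloid is given by a set of objects, hom-sets Hom X Y (arrows X to Y),
  composition cmp g f (= g after f), identities, and the local order leq.\<close>

record ('o, 'm) qtld =
  Obj  :: "'o set"
  Hom  :: "'o \<Rightarrow> 'o \<Rightarrow> 'm set"
  cmp  :: "'m \<Rightarrow> 'm \<Rightarrow> 'm"
  idm  :: "'o \<Rightarrow> 'm"
  leq  :: "'m \<Rightarrow> 'm \<Rightarrow> bool"
  invo :: "'m \<Rightarrow> 'm"

definition is_lub :: "('o,'m) qtld \<Rightarrow> 'o \<Rightarrow> 'o \<Rightarrow> 'm set \<Rightarrow> 'm \<Rightarrow> bool" where
  "is_lub Q X Y S s \<longleftrightarrow> s \<in> Hom Q X Y \<and> (\<forall>a\<in>S. leq Q a s) \<and>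
     (\<forall>u\<in>Hom Q X Y. (\<forall>a\<in>S. leq Q a u) \<longrightarrow> leq Q s u)"

definition hsup :: "('o,'m) qtld \<Rightarrow> 'o \<Rightarrow> 'o \<Rightarrow> 'm set \<Rightarrow> 'm" where
  "hsup Q X Y S = (THE s. is_lub Q X Y S s)"

definition hmeet :: "('o,'m) qtld \<Rightarrow> 'o \<Rightarrow> 'o \<Rightarrow> 'm \<Rightarrow> 'm \<Rightarrow> 'm" where
  "hmeet Q X Y a b = hsup Q X Y {c \<in> Hom Q X Y. leq Q c a \<and> leq Q c b}"

definition quantaloid :: "('o,'m) qtld \<Rightarrow> bool" where
  "quantaloid Q \<longleftrightarrow>
    (\<forall>X\<in>Obj Q. \<forall>Y\<in>Obj Q. \<forall>X'\<in>Obj Q. \<forall>Y'\<in>Obj Q.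
        Hom Q X Y \<inter> Hom Q X' Y' \<noteq> {} \<longrightarrow> X = X' \<and> Y = Y') \<and>
    (\<forall>X\<in>Obj Q. idm Q X \<in> Hom Q X X) \<and>
    (\<forall>X\<in>Obj Q. \<forall>Y\<in>Obj Q. \<forall>Z\<in>Obj Q. \<forall>f\<in>Hom Q X Y. \<forall>g\<in>Hom Q Y Z.
        cmp Q g f \<in> Hom Q X Z) \<and>
    (\<forall>W\<in>Obj Q. \<forall>X\<in>Obj Q. \<forall>Y\<in>Obj Q. \<forall>Z\<in>Obj Q.
        \<forall>f\<in>Hom Q W X. \<forall>g\<in>Hom Q X Y. \<forall>h\<in>Hom Q Y Z.
        cmp Q h (cmp Q g f) = cmp Q (cmp Q h g) f) \<and>
    (\<forall>X\<in>Obj Q. \<forall>Y\<in>Obj Q. \<forall>f\<in>Hom Q X Y.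
        cmp Q f (idm Q X) = f \<and> cmp Q (idm Q Y) f = f) \<and>
    (\<forall>X\<in>Obj Q. \<forall>Y\<in>Obj Q. \<forall>f\<in>Hom Q X Y. leq Q f f) \<and>
    (\<forall>X\<in>Obj Q. \<forall>Y\<in>Obj Q. \<forall>f\<in>Hom Q X Y. \<forall>g\<in>Hom Q X Y. \<forall>h\<in>Hom Q X Y.
        leq Q f g \<longrightarrow> leq Q g h \<longrightarrow> leq Q f h) \<and>
    (\<forall>X\<in>Obj Q. \<forall>Y\<in>Obj Q. \<forall>f\<in>Hom Q X Y. \<forall>g\<in>Hom Q X Y.
        leq Q f g \<longrightarrow> leq Q g f \<longrightarrow> f = g) \<and>
    (\<forall>X\<in>Obj Q. \<forall>Y\<in>Obj Q. \<forall>S. S \<subseteq> Hom Q X Y \<longrightarrow> (\<exists>s. is_lub Q X Y S s)) \<and>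
    (\<forall>X\<in>Obj Q. \<forall>Y\<in>Obj Q. \<forall>Z\<in>Obj Q. \<forall>S. \<forall>g\<in>Hom Q Y Z. S \<subseteq> Hom Q X Y \<longrightarrow>
        cmp Q g (hsup Q X Y S) = hsup Q X Z (cmp Q g ` S)) \<and>
    (\<forall>X\<in>Obj Q. \<forall>Y\<in>Obj Q. \<forall>Z\<in>Obj Q. \<forall>S. \<forall>f\<in>Hom Q X Y. S \<subseteq> Hom Q Y Z \<longrightarrow>
        cmp Q (hsup Q Y Z S) f = hsup Q X Z ((\<lambda>g. cmp Q g f) ` S))"

definition involutive_quantaloid :: "('o,'m) qtld \<Rightarrow> bool" where
  "involutive_quantaloid Q \<longleftrightarrow> quantaloid Q \<and>
    (\<forall>X\<in>Obj Q. \<forall>Y\<in>Obj Q. \<forall>f\<in>Hom Q X Y.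
       invo Q f \<in> Hom Q Y X \<and> invo Q (invo Q f) = f \<and>
       (\<forall>f'\<in>Hom Q X Y. leq Q f f' \<longrightarrow> leq Q (invo Q f) (invo Q f')) \<and>
       (\<forall>Z\<in>Obj Q. \<forall>g\<in>Hom Q Y Z. invo Q (cmp Q g f) = cmp Q (invo Q f) (invo Q g)))"

text \<open>Cauchy-bilateral: families (f_i : X \<rightarrow> X_i, g_i : X_i \<rightarrow> X) are given as sets T of
  triples (X_i, f_i, g_i); repetitions in a family do not affect the condition.\<close>
definition cauchy_bilateral :: "('o,'m) qtld \<Rightarrow> bool" where
  "cauchy_bilateral Q \<longleftrightarrow> involutive_quantaloid Q \<and>
    (\<forall>X\<in>Obj Q. \<forall>T. T \<subseteq> {(Y, f, g). Y \<in> Obj Q \<and> f \<in> Hom Q X Y \<and> g \<in> Hom Q Y X} \<longrightarrow>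
       (\<forall>(Yj, fj, gj)\<in>T. \<forall>(Yk, fk, gk)\<in>T.
           leq Q (cmp Q fk (cmp Q gj fj)) fk \<and> leq Q (cmp Q gj (cmp Q fj gk)) gk) \<longrightarrow>
       leq Q (idm Q X) (hsup Q X X {cmp Q g f | Y f g. (Y, f, g) \<in> T}) \<longrightarrow>
       leq Q (idm Q X) (hsup Q X X
          {cmp Q (hmeet Q Y X g (invo Q f)) (hmeet Q X Y (invo Q g) f) | Y f g. (Y, f, g) \<in> T}))"

text \<open>chom A y x is the hom A(y,x) : t x \<rightarrow> t y.\<close>
record ('a, 'o, 'm) qcat =
  cob  :: "'a set"
  cty  :: "'a \<Rightarrow> 'o"
  chom :: "'a \<Rightarrow> 'a \<Rightarrow> 'm"

definition qcategory :: "('o,'m) qtld \<Rightarrow> ('a,'o,'m) qcat \<Rightarrow> bool" where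
  "qcategory Q A \<longleftrightarrow>
    (\<forall>x\<in>cob A. cty A x \<in> Obj Q) \<and>
    (\<forall>x\<in>cob A. \<forall>y\<in>cob A. chom A y x \<in> Hom Q (cty A x) (cty A y)) \<and>
    (\<forall>x\<in>cob A. \<forall>y\<in>cob A. \<forall>z\<in>cob A. leq Q (cmp Q (chom A z y) (chom A y x)) (chom A z x)) \<and>
    (\<forall>x\<in>cob A. leq Q (idm Q (cty A x)) (chom A x x))"

definition symmetric :: "('o,'m) qtld \<Rightarrow> ('a,'o,'m) qcat \<Rightarrow> bool" where
  "symmetric Q A \<longleftrightarrow> (\<forall>x\<in>cob A. \<forall>y\<in>cob A. chom A x y = invo Q (chom A y x))"

definition symmetrisation :: "('o,'m) qtld \<Rightarrow> ('a,'o,'m) qcat \<Rightarrow> ('a,'o,'m) qcat" where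
  "symmetrisation Q A = A\<lparr>chom := (\<lambda>y x. hmeet Q (cty A x) (cty A y) (chom A y x) (invo Q (chom A x y)))\<rparr>"

text \<open>A presheaf \<phi> : *_X \<rightarrow> A, with \<phi> y = \<phi>(y,*) : X \<rightarrow> t y.\<close>
definition presheaf :: "('o,'m) qtld \<Rightarrow> ('a,'o,'m) qcat \<Rightarrow> 'o \<Rightarrow> ('a \<Rightarrow> 'm) \<Rightarrow> bool" where
  "presheaf Q A X \<phi> \<longleftrightarrow>
    (\<forall>y\<in>cob A. \<phi> y \<in> Hom Q X (cty A y)) \<and>
    (\<forall>y\<in>cob A. \<forall>y'\<in>cob A. leq Q (cmp Q (chom A y' y) (\<phi> y)) (\<phi> y')) \<and>
    (\<forall>y\<in>cob A. leq Q (cmp Q (\<phi> y) (idm Q X)) (\<phi> y))"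

text \<open>A distributor \<psi> : A \<rightarrow> *_X, with \<psi> y = \<psi>(*,y) : t y \<rightarrow> X.\<close>
definition copresheaf :: "('o,'m) qtld \<Rightarrow> ('a,'o,'m) qcat \<Rightarrow> 'o \<Rightarrow> ('a \<Rightarrow> 'm) \<Rightarrow> bool" where
  "copresheaf Q A X \<psi> \<longleftrightarrow>
    (\<forall>y\<in>cob A. \<psi> y \<in> Hom Q (cty A y) X) \<and>
    (\<forall>y\<in>cob A. leq Q (cmp Q (idm Q X) (\<psi> y)) (\<psi> y)) \<and>
    (\<forall>y\<in>cob A. \<forall>y'\<in>cob A. leq Q (cmp Q (\<psi> y) (chom A y y')) (\<psi> y'))"

text \<open>\<psi> is a right adjoint of the presheaf \<phi> : *_X \<rightarrow> A:
  *_X \<le> \<psi> \<otimes> \<phi> and \<phi> \<otimes> \<psi> \<le> A.\<close>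
definition right_adjoint :: "('o,'m) qtld \<Rightarrow> ('a,'o,'m) qcat \<Rightarrow> 'o \<Rightarrow> ('a \<Rightarrow> 'm) \<Rightarrow> ('a \<Rightarrow> 'm) \<Rightarrow> bool" where
  "right_adjoint Q A X \<phi> \<psi> \<longleftrightarrow> copresheaf Q A X \<psi> \<and>
    leq Q (idm Q X) (hsup Q X X ((\<lambda>y. cmp Q (\<psi> y) (\<phi> y)) ` cob A)) \<and>
    (\<forall>y\<in>cob A. \<forall>y'\<in>cob A. leq Q (cmp Q (\<phi> y) (\<psi> y')) (chom A y y'))"

definition left_adjoint_presheaf :: "('o,'m) qtld \<Rightarrow> ('a,'o,'m) qcat \<Rightarrow> 'o \<Rightarrow> ('a \<Rightarrow> 'm) \<Rightarrow> bool" where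
  "left_adjoint_presheaf Q A X \<phi> \<longleftrightarrow> presheaf Q A X \<phi> \<and> (\<exists>\<psi>. right_adjoint Q A X \<phi> \<psi>)"

definition cauchy_complete :: "('o,'m) qtld \<Rightarrow> ('a,'o,'m) qcat \<Rightarrow> bool" where
  "cauchy_complete Q A \<longleftrightarrow>
    (\<forall>X\<in>Obj Q. \<forall>\<phi>. left_adjoint_presheaf Q A X \<phi> \<longrightarrow>
       (\<exists>a\<in>cob A. cty A a = X \<and> (\<forall>y\<in>cob A. \<phi> y = chom A y a)))"

text \<open>Cauchy completion: objects are pairs (X, \<phi>) with \<phi> a left adjoint presheaf of type X
  (made extensional outside cob A); the hom A_cc((Y,\<psi>),(X,\<phi>)) is the unique element of \<psi>* \<otimes> \<phi>.\<close>
definition cauchy_completion :: "('o,'m) qtld \<Rightarrow> ('a,'o,'m) qcat \<Rightarrow> ('o \<times> ('a \<Rightarrow> 'm), 'o, 'm) qcat" where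
  "cauchy_completion Q A =
    \<lparr> cob = {(X, \<phi>). X \<in> Obj Q \<and> left_adjoint_presheaf Q A X \<phi> \<and> (\<forall>y. y \<notin> cob A \<longrightarrow> \<phi> y = undefined)},
      cty = fst,
      chom = (\<lambda>(Y, \<psi>) (X, \<phi>). THE h. \<exists>\<psi>'. right_adjoint Q A Y \<psi> \<psi>' \<and>
                 h = hsup Q X Y ((\<lambda>y. cmp Q (\<psi>' y) (\<phi> y)) ` cob A)) \<rparr>"

end

theory Submission
  imports Defs
begin

locale CB =
  fixes Q :: "('o, 'm) qtld"
  assumes cb: "cauchy_bilateral Q"
begin

lemma iq: "involutive_quantaloid Q" using cb unfolding cauchy_bilateral_def by blast
lemma qt: "quantaloid Q" using iq unfolding involutive_quantaloid_def by blast

lemmas qd = qt[unfolded quantaloid_def]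
lemmas q1 = qd[THEN conjunct2, THEN conjunct1]
lemmas q2 = qd[THEN conjunct2, THEN conjunct2, THEN conjunct1]
lemmas q3 = qd[THEN conjunct2, THEN conjunct2, THEN conjunct2, THEN conjunct1]
lemmas q4 = qd[THEN conjunct2, THEN conjunct2, THEN conjunct2, THEN conjunct2, THEN conjunct1]
lemmas q5 = qd[THEN conjunct2, THEN conjunct2, THEN conjunct2, THEN conjunct2, THEN conjunct2, THEN conjunct1]
lemmas q6 = qd[THEN conjunct2, THEN conjunct2, THEN conjunct2, THEN conjunct2, THEN conjunct2, THEN conjunct2, THEN conjunct1]
lemmas q7 = qd[THEN conjunct2, THEN conjunct2, THEN conjunct2, THEN conjunct2, THEN conjunct2, THEN conjunct2, THEN conjunct2, THEN conjunct1]
lemmas q8 = qd[THEN conjunct2, THEN conjunct2, THEN conjunct2, THEN conjunct2, THEN conjunct2, THEN conjunct2, THEN conjunct2, THEN conjunct2, THEN conjunct1]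
lemmas q9 = qd[THEN conjunct2, THEN conjunct2, THEN conjunct2, THEN conjunct2, THEN conjunct2, THEN conjunct2, THEN conjunct2, THEN conjunct2, THEN conjunct2, THEN conjunct1]
lemmas q10 = qd[THEN conjunct2, THEN conjunct2, THEN conjunct2, THEN conjunct2, THEN conjunct2, THEN conjunct2, THEN conjunct2, THEN conjunct2, THEN conjunct2, THEN conjunct2]
lemmas id_ = iq[unfolded involutive_quantaloid_def, THEN conjunct2]

lemma idm_in: "X \<in> Obj Q \<Longrightarrow> idm Q X \<in> Hom Q X X"
  using q1 by blast
lemma cmp_in: "X \<in> Obj Q \<Longrightarrow> Y \<in> Obj Q \<Longrightarrow> Z \<in> Obj Q \<Longrightarrow> f \<in> Hom Q X Y \<Longrightarrow> g \<in> Hom Q Y Z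
  \<Longrightarrow> cmp Q g f \<in> Hom Q X Z"
  using q2 by blast
lemma assoc: "W \<in> Obj Q \<Longrightarrow> X \<in> Obj Q \<Longrightarrow> Y \<in> Obj Q \<Longrightarrow> Z \<in> Obj Q \<Longrightarrow>
  f \<in> Hom Q W X \<Longrightarrow> g \<in> Hom Q X Y \<Longrightarrow> h \<in> Hom Q Y Z \<Longrightarrow>
  cmp Q h (cmp Q g f) = cmp Q (cmp Q h g) f"
  using q3 by blast
lemma idr: "X \<in> Obj Q \<Longrightarrow> Y \<in> Obj Q \<Longrightarrow> f \<in> Hom Q X Y \<Longrightarrow> cmp Q f (idm Q X) = f"
  using q4 by blast
lemma idl: "X \<in> Obj Q \<Longrightarrow> Y \<in> Obj Q \<Longrightarrow> f \<in> Hom Q X Y \<Longrightarrow> cmp Q (idm Q Y) f = f"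
  using q4 by blast
lemma refl: "X \<in> Obj Q \<Longrightarrow> Y \<in> Obj Q \<Longrightarrow> f \<in> Hom Q X Y \<Longrightarrow> leq Q f f"
  using q5 by blast
lemma trans: "X \<in> Obj Q \<Longrightarrow> Y \<in> Obj Q \<Longrightarrow> f \<in> Hom Q X Y \<Longrightarrow> g \<in> Hom Q X Y \<Longrightarrow> h \<in> Hom Q X Y \<Longrightarrow>
  leq Q f g \<Longrightarrow> leq Q g h \<Longrightarrow> leq Q f h"
  using q6 by blast
lemma antisym: "X \<in> Obj Q \<Longrightarrow> Y \<in> Obj Q \<Longrightarrow> f \<in> Hom Q X Y \<Longrightarrow> g \<in> Hom Q X Y \<Longrightarrow>
  leq Q f g \<Longrightarrow> leq Q g f \<Longrightarrow> f = g"
  using q7 by blast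
lemma lub_ex: "X \<in> Obj Q \<Longrightarrow> Y \<in> Obj Q \<Longrightarrow> S \<subseteq> Hom Q X Y \<Longrightarrow> \<exists>s. is_lub Q X Y S s"
  using q8 by blast
lemma cmp_hsup_l: "X \<in> Obj Q \<Longrightarrow> Y \<in> Obj Q \<Longrightarrow> Z \<in> Obj Q \<Longrightarrow> g \<in> Hom Q Y Z \<Longrightarrow> S \<subseteq> Hom Q X Y \<Longrightarrow>
  cmp Q g (hsup Q X Y S) = hsup Q X Z (cmp Q g ` S)"
  using q9 by blast
lemma cmp_hsup_r: "X \<in> Obj Q \<Longrightarrow> Y \<in> Obj Q \<Longrightarrow> Z \<in> Obj Q \<Longrightarrow> f \<in> Hom Q X Y \<Longrightarrow> S \<subseteq> Hom Q Y Z \<Longrightarrow>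
  cmp Q (hsup Q Y Z S) f = hsup Q X Z ((\<lambda>g. cmp Q g f) ` S)"
  using q10 by blast

lemma invo_in: "X \<in> Obj Q \<Longrightarrow> Y \<in> Obj Q \<Longrightarrow> f \<in> Hom Q X Y \<Longrightarrow> invo Q f \<in> Hom Q Y X"
  using id_ by blast
lemma invo_invo: "X \<in> Obj Q \<Longrightarrow> Y \<in> Obj Q \<Longrightarrow> f \<in> Hom Q X Y \<Longrightarrow> invo Q (invo Q f) = f"
  using id_ by blast
lemma invo_mono: "X \<in> Obj Q \<Longrightarrow> Y \<in> Obj Q \<Longrightarrow> f \<in> Hom Q X Y \<Longrightarrow> f' \<in> Hom Q X Y \<Longrightarrow> leq Q f f' \<Longrightarrow>
   leq Q (invo Q f) (invo Q f')"
  using id_ by blast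
lemma invo_cmp: "X \<in> Obj Q \<Longrightarrow> Y \<in> Obj Q \<Longrightarrow> Z \<in> Obj Q \<Longrightarrow> f \<in> Hom Q X Y \<Longrightarrow> g \<in> Hom Q Y Z \<Longrightarrow>
   invo Q (cmp Q g f) = cmp Q (invo Q f) (invo Q g)"
  using id_ by blast

lemma hsup_lub: assumes "X \<in> Obj Q" "Y \<in> Obj Q" "S \<subseteq> Hom Q X Y"
  shows "is_lub Q X Y S (hsup Q X Y S)"
proof -
  obtain s where s: "is_lub Q X Y S s" using lub_ex assms by blast
  have "\<And>s'. is_lub Q X Y S s' \<Longrightarrow> s' = s"
    using s assms antisym unfolding is_lub_def by metis
  then show ?thesis unfolding hsup_def using s by (metis theI)
qed

lemma hsup_in: "X \<in> Obj Q \<Longrightarrow> Y \<in> Obj Q \<Longrightarrow> S \<subseteq> Hom Q X Y \<Longrightarrow> hsup Q X Y S \<in> Hom Q X Y"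
  using hsup_lub unfolding is_lub_def by blast
lemma hsup_upper: "X \<in> Obj Q \<Longrightarrow> Y \<in> Obj Q \<Longrightarrow> S \<subseteq> Hom Q X Y \<Longrightarrow> a \<in> S \<Longrightarrow> leq Q a (hsup Q X Y S)"
  using hsup_lub unfolding is_lub_def by blast
lemma hsup_least: assumes "X \<in> Obj Q" "Y \<in> Obj Q" "S \<subseteq> Hom Q X Y" "u \<in> Hom Q X Y"
   "\<And>a. a \<in> S \<Longrightarrow> leq Q a u" shows "leq Q (hsup Q X Y S) u"
proof -
  have "is_lub Q X Y S (hsup Q X Y S)" using hsup_lub assms by blast
  then have "\<forall>u\<in>Hom Q X Y. (\<forall>a\<in>S. leq Q a u) \<longrightarrow> leq Q (hsup Q X Y S) u" unfolding is_lub_def by blast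
  then show ?thesis using assms by blast
qed

lemma hsup_pair: assumes "X \<in> Obj Q" "Y \<in> Obj Q" "f \<in> Hom Q X Y" "f' \<in> Hom Q X Y" "leq Q f f'"
  shows "hsup Q X Y {f, f'} = f'"
proof -
  have "{f,f'} \<subseteq> Hom Q X Y" using assms by auto
  note S = this
  have 1: "leq Q (hsup Q X Y {f, f'}) f'"
    by (rule hsup_least[OF assms(1,2) S assms(4)]) (use assms refl in auto)
  have 2: "leq Q f' (hsup Q X Y {f, f'})" by (rule hsup_upper[OF assms(1,2) S]) simp
  show ?thesis by (rule antisym[OF assms(1,2) hsup_in[OF assms(1,2) S] assms(4) 1 2])
qed

lemma mono_l: assumes "X \<in> Obj Q" "Y \<in> Obj Q" "Z \<in> Obj Q" "f \<in> Hom Q X Y" "f' \<in> Hom Q X Y"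
  "g \<in> Hom Q Y Z" "leq Q f f'"
  shows "leq Q (cmp Q g f) (cmp Q g f')"
proof -
  have S: "{f,f'} \<subseteq> Hom Q X Y" using assms by auto
  have e: "cmp Q g f' = hsup Q X Z (cmp Q g ` {f,f'})"
    using cmp_hsup_l[OF assms(1-3,6) S] hsup_pair[OF assms(1,2,4,5,7)] by simp
  have m: "cmp Q g ` {f,f'} \<subseteq> Hom Q X Z" using assms cmp_in by auto
  have "leq Q (cmp Q g f) (hsup Q X Z (cmp Q g ` {f,f'}))" by (rule hsup_upper[OF assms(1,3) m]) simp
  then show ?thesis by (simp only: e[symmetric])
qed

lemma mono_r: assumes "X \<in> Obj Q" "Y \<in> Obj Q" "Z \<in> Obj Q" "g \<in> Hom Q Y Z" "g' \<in> Hom Q Y Z"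
  "f \<in> Hom Q X Y" "leq Q g g'"
  shows "leq Q (cmp Q g f) (cmp Q g' f)"
proof -
  have S: "{g,g'} \<subseteq> Hom Q Y Z" using assms by auto
  have e: "cmp Q g' f = hsup Q X Z ((\<lambda>g. cmp Q g f) ` {g,g'})"
    using cmp_hsup_r[OF assms(1-3,6) S] hsup_pair[OF assms(2,3,4,5,7)] by simp
  have m: "(\<lambda>g. cmp Q g f) ` {g,g'} \<subseteq> Hom Q X Z" using assms cmp_in by auto
  have "leq Q (cmp Q g f) (hsup Q X Z ((\<lambda>g. cmp Q g f) ` {g,g'}))" by (rule hsup_upper[OF assms(1,3) m]) simp
  then show ?thesis by (simp only: e[symmetric])
qed

lemma mono2: assumes "X \<in> Obj Q" "Y \<in> Obj Q" "Z \<in> Obj Q" "f \<in> Hom Q X Y" "f' \<in> Hom Q X Y"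
  "g \<in> Hom Q Y Z" "g' \<in> Hom Q Y Z" "leq Q f f'" "leq Q g g'"
  shows "leq Q (cmp Q g f) (cmp Q g' f')"
  using trans[OF assms(1,3) cmp_in[OF assms(1-3,4,6)] cmp_in[OF assms(1-3,5,6)] cmp_in[OF assms(1-3,5,7)]
      mono_l[OF assms(1-6,8)] mono_r[OF assms(1-3,6,7,5,9)]] .

lemma cmp_hsup_le: assumes "X \<in> Obj Q" "Y \<in> Obj Q" "Z \<in> Obj Q" "g \<in> Hom Q Y Z" "S \<subseteq> Hom Q X Y"
  "u \<in> Hom Q X Z" "\<And>a. a \<in> S \<Longrightarrow> leq Q (cmp Q g a) u"
  shows "leq Q (cmp Q g (hsup Q X Y S)) u"
  unfolding cmp_hsup_l[OF assms(1-5)]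
  apply (rule hsup_least[OF assms(1,3) _ assms(6)])
  using assms cmp_in by auto

lemma hsup_cmp_le: assumes "X \<in> Obj Q" "Y \<in> Obj Q" "Z \<in> Obj Q" "f \<in> Hom Q X Y" "S \<subseteq> Hom Q Y Z"
  "u \<in> Hom Q X Z" "\<And>a. a \<in> S \<Longrightarrow> leq Q (cmp Q a f) u"
  shows "leq Q (cmp Q (hsup Q Y Z S) f) u"
  unfolding cmp_hsup_r[OF assms(1-5)]
  apply (rule hsup_least[OF assms(1,3) _ assms(6)])
  using assms cmp_in by auto

lemma invo_hsup: assumes "X \<in> Obj Q" "Y \<in> Obj Q" "S \<subseteq> Hom Q X Y"
  shows "invo Q (hsup Q X Y S) = hsup Q Y X (invo Q ` S)"
proof -
  have iS: "invo Q ` S \<subseteq> Hom Q Y X" using assms invo_in by blast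
  have h: "hsup Q X Y S \<in> Hom Q X Y" using hsup_in assms by blast
  have 1: "leq Q (hsup Q Y X (invo Q ` S)) (invo Q (hsup Q X Y S))"
  proof (rule hsup_least[OF assms(2,1) iS invo_in[OF assms(1,2) h]])
    fix b assume "b \<in> invo Q ` S"
    then obtain a where a: "a \<in> S" "b = invo Q a" by blast
    have "a \<in> Hom Q X Y" using a assms by blast
    then show "leq Q b (invo Q (hsup Q X Y S))"
      using invo_mono[OF assms(1,2) _ h] hsup_upper[OF assms a(1)] a(2) by blast
  qed
  have "leq Q (hsup Q X Y S) (invo Q (hsup Q Y X (invo Q ` S)))"
  proof (rule hsup_least[OF assms])
    show "invo Q (hsup Q Y X (invo Q ` S)) \<in> Hom Q X Y" using invo_in hsup_in iS assms by blast
    fix a assume a: "a \<in> S"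
    have "leq Q (invo Q a) (hsup Q Y X (invo Q ` S))" using hsup_upper[OF assms(2,1) iS] a by blast
    then have "leq Q (invo Q (invo Q a)) (invo Q (hsup Q Y X (invo Q ` S)))"
      using invo_mono[OF assms(2,1)] a assms iS hsup_in invo_in by blast
    then show "leq Q a (invo Q (hsup Q Y X (invo Q ` S)))" using invo_invo a assms by auto
  qed
  then have "leq Q (invo Q (hsup Q X Y S)) (hsup Q Y X (invo Q ` S))"
    using invo_mono[OF assms(1,2) h] invo_invo[OF assms(2,1)] hsup_in[OF assms(2,1) iS]
      invo_in[OF assms(2,1)] by metis
  then show ?thesis using 1 antisym[OF assms(2,1)] hsup_in[OF assms(2,1) iS] invo_in[OF assms(1,2) h]
    by blast
qed

lemma invo_idm: assumes "X \<in> Obj Q" shows "invo Q (idm Q X) = idm Q X"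
proof -
  have i: "idm Q X \<in> Hom Q X X" using idm_in assms .
  have ii: "invo Q (idm Q X) \<in> Hom Q X X" using invo_in[OF assms assms i] .
  have "idm Q X = invo Q (invo Q (idm Q X))" using invo_invo[OF assms assms i] by simp
  also have "\<dots> = invo Q (cmp Q (invo Q (idm Q X)) (idm Q X))" using idr[OF assms assms ii] by simp
  also have "\<dots> = cmp Q (invo Q (idm Q X)) (invo Q (invo Q (idm Q X)))"
    using invo_cmp[OF assms assms assms i ii] .
  also have "\<dots> = invo Q (idm Q X)" using invo_invo[OF assms assms i] idr[OF assms assms ii] by simp
  finally show ?thesis by (rule sym)
qed


lemma hmeet_in: "X \<in> Obj Q \<Longrightarrow> Y \<in> Obj Q \<Longrightarrow> hmeet Q X Y a b \<in> Hom Q X Y"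
  unfolding hmeet_def by (rule hsup_in) auto
lemma hmeet_greatest: "X \<in> Obj Q \<Longrightarrow> Y \<in> Obj Q \<Longrightarrow> c \<in> Hom Q X Y \<Longrightarrow> leq Q c a \<Longrightarrow> leq Q c b \<Longrightarrow>
  leq Q c (hmeet Q X Y a b)"
  unfolding hmeet_def by (rule hsup_upper) auto
lemma hmeet_le1: "X \<in> Obj Q \<Longrightarrow> Y \<in> Obj Q \<Longrightarrow> a \<in> Hom Q X Y \<Longrightarrow> leq Q (hmeet Q X Y a b) a"
  unfolding hmeet_def by (rule hsup_least) auto
lemma hmeet_le2: "X \<in> Obj Q \<Longrightarrow> Y \<in> Obj Q \<Longrightarrow> b \<in> Hom Q X Y \<Longrightarrow> leq Q (hmeet Q X Y a b) b"
  unfolding hmeet_def by (rule hsup_least) auto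
lemma hmeet_comm: "hmeet Q X Y a b = hmeet Q X Y b a"
  unfolding hmeet_def by (simp add: conj_commute)

lemma invo_hmeet: assumes "X \<in> Obj Q" "Y \<in> Obj Q" "a \<in> Hom Q X Y" "b \<in> Hom Q X Y"
  shows "invo Q (hmeet Q X Y a b) = hmeet Q Y X (invo Q a) (invo Q b)"
proof -
  have m: "hmeet Q X Y a b \<in> Hom Q X Y" using hmeet_in assms by blast
  have m': "hmeet Q Y X (invo Q a) (invo Q b) \<in> Hom Q Y X" using hmeet_in assms by blast
  have ia: "invo Q a \<in> Hom Q Y X" and ib: "invo Q b \<in> Hom Q Y X" using invo_in assms by auto
  have 1: "leq Q (invo Q (hmeet Q X Y a b)) (hmeet Q Y X (invo Q a) (invo Q b))"
    apply (rule hmeet_greatest[OF assms(2,1) invo_in[OF assms(1,2) m]])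
    using invo_mono[OF assms(1,2) m] hmeet_le1 hmeet_le2 assms by auto
  have "leq Q (invo Q (hmeet Q Y X (invo Q a) (invo Q b))) (hmeet Q X Y a b)"
    apply (rule hmeet_greatest[OF assms(1,2) invo_in[OF assms(2,1) m']])
    using invo_mono[OF assms(2,1) m'] hmeet_le1[OF assms(2,1) ia] hmeet_le2[OF assms(2,1) ib]
      invo_invo assms ia ib by metis+
  then have "leq Q (invo Q (invo Q (hmeet Q Y X (invo Q a) (invo Q b)))) (invo Q (hmeet Q X Y a b))"
    using invo_mono[OF assms(1,2) _ m] invo_in[OF assms(2,1) m'] by blast
  then have 2: "leq Q (hmeet Q Y X (invo Q a) (invo Q b)) (invo Q (hmeet Q X Y a b))"
    using invo_invo[OF assms(2,1) m'] by simp
  show ?thesis using antisym[OF assms(2,1) invo_in[OF assms(1,2) m] m' 1 2] .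
qed

end

context CB
begin

lemma trans2: "leq Q f g \<Longrightarrow> leq Q g h \<Longrightarrow> X \<in> Obj Q \<Longrightarrow> Y \<in> Obj Q \<Longrightarrow> f \<in> Hom Q X Y \<Longrightarrow>
  g \<in> Hom Q X Y \<Longrightarrow> h \<in> Hom Q X Y \<Longrightarrow> leq Q f h"
  using trans by blast

lemma qc_facts:
  assumes "qcategory Q A"
  shows "\<And>x. x \<in> cob A \<Longrightarrow> cty A x \<in> Obj Q"
    and "\<And>x y. x \<in> cob A \<Longrightarrow> y \<in> cob A \<Longrightarrow> chom A y x \<in> Hom Q (cty A x) (cty A y)"
    and "\<And>x y z. x \<in> cob A \<Longrightarrow> y \<in> cob A \<Longrightarrow> z \<in> cob A \<Longrightarrow>
          leq Q (cmp Q (chom A z y) (chom A y x)) (chom A z x)"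
    and "\<And>x. x \<in> cob A \<Longrightarrow> leq Q (idm Q (cty A x)) (chom A x x)"
  using assms unfolding qcategory_def by blast+

lemma adj_invo:
  assumes A: "qcategory Q A" and S: "symmetric Q A" and X: "X \<in> Obj Q"
    and P: "presheaf Q A X \<phi>" and R: "right_adjoint Q A X \<phi> \<psi>" and x: "x \<in> cob A"
  shows "\<psi> x = invo Q (\<phi> x)"
proof -
  note ty = qc_facts(1)[OF A] and hA = qc_facts(2)[OF A] and cA = qc_facts(3)[OF A]
  have sy: "\<And>x y. x \<in> cob A \<Longrightarrow> y \<in> cob A \<Longrightarrow> chom A x y = invo Q (chom A y x)"
    using S unfolding symmetric_def by blast
  have hp: "\<And>y. y \<in> cob A \<Longrightarrow> \<phi> y \<in> Hom Q X (cty A y)" using P unfolding presheaf_def by blast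
  have pp: "\<And>y y'. y \<in> cob A \<Longrightarrow> y' \<in> cob A \<Longrightarrow> leq Q (cmp Q (chom A y' y) (\<phi> y)) (\<phi> y')"
    using P unfolding presheaf_def by blast
  have hq: "\<And>y. y \<in> cob A \<Longrightarrow> \<psi> y \<in> Hom Q (cty A y) X" using R unfolding right_adjoint_def copresheaf_def by blast
  have qq: "\<And>y y'. y \<in> cob A \<Longrightarrow> y' \<in> cob A \<Longrightarrow> leq Q (cmp Q (\<psi> y) (chom A y y')) (\<psi> y')"
    using R unfolding right_adjoint_def copresheaf_def by blast
  have unit: "leq Q (idm Q X) (hsup Q X X ((\<lambda>y. cmp Q (\<psi> y) (\<phi> y)) ` cob A))"
    using R unfolding right_adjoint_def by blast
  have counit: "\<And>y y'. y \<in> cob A \<Longrightarrow> y' \<in> cob A \<Longrightarrow> leq Q (cmp Q (\<phi> y) (\<psi> y')) (chom A y y')"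
    using R unfolding right_adjoint_def by blast
  define T where "T = (\<lambda>y. (cty A y, \<phi> y, \<psi> y)) ` cob A"
  have cbX: "\<forall>T. T \<subseteq> {(Y, f, g). Y \<in> Obj Q \<and> f \<in> Hom Q X Y \<and> g \<in> Hom Q Y X} \<longrightarrow>
       (\<forall>(Yj, fj, gj)\<in>T. \<forall>(Yk, fk, gk)\<in>T.
           leq Q (cmp Q fk (cmp Q gj fj)) fk \<and> leq Q (cmp Q gj (cmp Q fj gk)) gk) \<longrightarrow>
       leq Q (idm Q X) (hsup Q X X {cmp Q g f | Y f g. (Y, f, g) \<in> T}) \<longrightarrow>
       leq Q (idm Q X) (hsup Q X X
          {cmp Q (hmeet Q Y X g (invo Q f)) (hmeet Q X Y (invo Q g) f) | Y f g. (Y, f, g) \<in> T})"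
    using cb X unfolding cauchy_bilateral_def by blast
  have T1: "T \<subseteq> {(Y, f, g). Y \<in> Obj Q \<and> f \<in> Hom Q X Y \<and> g \<in> Hom Q Y X}"
    unfolding T_def using ty hp hq by blast
  have c1: "leq Q (cmp Q (\<phi> k) (cmp Q (\<psi> j) (\<phi> j))) (\<phi> k)" if "j \<in> cob A" "k \<in> cob A" for j k
  proof -
    have o: "cty A j \<in> Obj Q" "cty A k \<in> Obj Q" using ty that by auto
    have e: "cmp Q (\<phi> k) (cmp Q (\<psi> j) (\<phi> j)) = cmp Q (cmp Q (\<phi> k) (\<psi> j)) (\<phi> j)"
      using assoc[OF X o(1) X o(2) hp hq hp] that by blast
    have "leq Q (cmp Q (cmp Q (\<phi> k) (\<psi> j)) (\<phi> j)) (cmp Q (chom A k j) (\<phi> j))"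
      by (rule mono_r[OF X o(1) o(2) cmp_in[OF o(1) X o(2) hq hp] hA hp counit]) (use that in auto)
    moreover have "leq Q (cmp Q (chom A k j) (\<phi> j)) (\<phi> k)" using pp that by blast
    ultimately show ?thesis unfolding e
      by (rule trans2[where X=X and Y="cty A k"]) (use that o X in \<open>auto intro: cmp_in hp hq hA\<close>)
  qed
  have c2: "leq Q (cmp Q (\<psi> j) (cmp Q (\<phi> j) (\<psi> k))) (\<psi> k)" if "j \<in> cob A" "k \<in> cob A" for j k
  proof -
    have o: "cty A j \<in> Obj Q" "cty A k \<in> Obj Q" using ty that by auto
    have "leq Q (cmp Q (\<psi> j) (cmp Q (\<phi> j) (\<psi> k))) (cmp Q (\<psi> j) (chom A j k))"
      by (rule mono_l[where X="cty A k" and Y="cty A j" and Z=X]) (use that o X in \<open>auto intro: cmp_in hp hq hA counit\<close>)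
    moreover have "leq Q (cmp Q (\<psi> j) (chom A j k)) (\<psi> k)" using qq that by blast
    ultimately show ?thesis
      by (rule trans2[where X="cty A k" and Y=X]) (use that o X in \<open>auto intro: cmp_in hp hq hA\<close>)
  qed
  have setT: "{cmp Q g f | Y f g. (Y, f, g) \<in> T} = (\<lambda>y. cmp Q (\<psi> y) (\<phi> y)) ` cob A"
    unfolding T_def by blast
  define m where "m y = hmeet Q (cty A y) X (\<psi> y) (invo Q (\<phi> y))" for y
  define m' where "m' y = hmeet Q X (cty A y) (invo Q (\<psi> y)) (\<phi> y)" for y
  have setT2: "{cmp Q (hmeet Q Y X g (invo Q f)) (hmeet Q X Y (invo Q g) f) | Y f g. (Y, f, g) \<in> T}
     = (\<lambda>y. cmp Q (m y) (m' y)) ` cob A"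
    unfolding T_def m_def m'_def by blast
  have U: "leq Q (idm Q X) (hsup Q X X ((\<lambda>y. cmp Q (m y) (m' y)) ` cob A))"
  proof -
    have h: "\<forall>(Yj, fj, gj)\<in>T. \<forall>(Yk, fk, gk)\<in>T.
           leq Q (cmp Q fk (cmp Q gj fj)) fk \<and> leq Q (cmp Q gj (cmp Q fj gk)) gk"
      unfolding T_def using c1 c2 by auto
    have u: "leq Q (idm Q X) (hsup Q X X {cmp Q g f | Y f g. (Y, f, g) \<in> T})"
      unfolding setT by (rule unit)
    show ?thesis using mp[OF mp[OF mp[OF spec[OF cbX, of T] T1] h] u] unfolding setT2 .
  qed
  have ox: "cty A x \<in> Obj Q" using ty x by blast
  have mh: "m y \<in> Hom Q (cty A y) X" if "y \<in> cob A" for y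
    unfolding m_def using hmeet_in ty that X by blast
  have mh': "m' y \<in> Hom Q X (cty A y)" if "y \<in> cob A" for y
    unfolding m'_def using hmeet_in ty that X by blast
  have Mh: "(\<lambda>y. cmp Q (m y) (m' y)) ` cob A \<subseteq> Hom Q X X"
    using mh mh' cmp_in ty X by blast
  have ml1: "leq Q (m y) (\<psi> y)" if "y \<in> cob A" for y
    unfolding m_def using hmeet_le1 ty that X hq by blast
  have ml2: "leq Q (m y) (invo Q (\<phi> y))" if "y \<in> cob A" for y
    unfolding m_def using hmeet_le2 ty that X hp invo_in by blast
  have ml1': "leq Q (m' y) (invo Q (\<psi> y))" if "y \<in> cob A" for y
    unfolding m'_def using hmeet_le1 ty that X hq invo_in by blast
  have ml2': "leq Q (m' y) (\<phi> y)" if "y \<in> cob A" for y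
    unfolding m'_def using hmeet_le2 ty that X hp by blast
  define Us where "Us = hsup Q X X ((\<lambda>y. cmp Q (m y) (m' y)) ` cob A)"
  have Ush: "Us \<in> Hom Q X X" unfolding Us_def using hsup_in[OF X X Mh] .
  have ipx: "invo Q (\<phi> x) \<in> Hom Q (cty A x) X" using invo_in[OF X ox hp[OF x]] .
  have ipsx: "invo Q (\<psi> x) \<in> Hom Q X (cty A x)" using invo_in[OF ox X hq[OF x]] .
  have a: "leq Q (\<psi> x) (invo Q (\<phi> x))"
  proof -
    have "\<psi> x = cmp Q (idm Q X) (\<psi> x)" using idl[OF ox X hq[OF x]] by simp
    moreover have "leq Q (cmp Q (idm Q X) (\<psi> x)) (cmp Q Us (\<psi> x))"
      by (rule mono_r[OF ox X X idm_in[OF X] Ush hq[OF x]]) (use U Us_def in simp)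
    moreover have "leq Q (cmp Q Us (\<psi> x)) (invo Q (\<phi> x))"
      unfolding Us_def
    proof (rule hsup_cmp_le[OF ox X X hq[OF x] Mh ipx])
      fix a assume "a \<in> (\<lambda>y. cmp Q (m y) (m' y)) ` cob A"
      then obtain y where y: "y \<in> cob A" and a: "a = cmp Q (m y) (m' y)" by blast
      have oy: "cty A y \<in> Obj Q" using ty y by blast
      have e: "cmp Q a (\<psi> x) = cmp Q (m y) (cmp Q (m' y) (\<psi> x))"
        unfolding a using assoc[OF ox X oy X hq[OF x] mh'[OF y] mh[OF y]] by simp
      have l1: "leq Q (cmp Q (m' y) (\<psi> x)) (chom A y x)"
        by (rule trans2[where X="cty A x" and Y="cty A y", OF mono_r[OF ox X oy mh'[OF y] hp[OF y] hq[OF x] ml2'[OF y]] counit[OF y x]])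
          (use ox oy X x y in \<open>auto intro: cmp_in hp hq hA mh'\<close>)
      have l2: "leq Q (cmp Q (m y) (cmp Q (m' y) (\<psi> x))) (cmp Q (invo Q (\<phi> y)) (chom A y x))"
        by (rule mono2[OF ox oy X cmp_in[OF ox X oy hq[OF x] mh'[OF y]] hA[OF x y] mh[OF y] invo_in[OF X oy hp[OF y]] l1 ml2[OF y]])
      have e2: "cmp Q (invo Q (\<phi> y)) (chom A y x) = invo Q (cmp Q (chom A x y) (\<phi> y))"
        using invo_cmp[OF X oy ox hp[OF y] hA[OF y x]] sy[OF y x] by simp
      have l3: "leq Q (invo Q (cmp Q (chom A x y) (\<phi> y))) (invo Q (\<phi> x))"
        by (rule invo_mono[OF X ox cmp_in[OF X oy ox hp[OF y] hA[OF y x]] hp[OF x] pp[OF y x]])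
      show "leq Q (cmp Q a (\<psi> x)) (invo Q (\<phi> x))"
        unfolding e using l2 l3 unfolding e2
        by (rule trans2[where X="cty A x" and Y=X])
          (use ox oy X x y in \<open>auto intro: cmp_in hp hq hA mh' mh invo_in\<close>)
    qed
    ultimately show ?thesis
      by (metis trans2[where X="cty A x" and Y=X] ipx cmp_in[OF ox X X hq[OF x] Ush] hq[OF x] ox X)
  qed
  have b: "leq Q (\<phi> x) (invo Q (\<psi> x))"
  proof -
    have "\<phi> x = cmp Q (\<phi> x) (idm Q X)" using idr[OF X ox hp[OF x]] by simp
    moreover have "leq Q (cmp Q (\<phi> x) (idm Q X)) (cmp Q (\<phi> x) Us)"
      by (rule mono_l[OF X X ox idm_in[OF X] Ush hp[OF x]]) (use U Us_def in simp)
    moreover have "leq Q (cmp Q (\<phi> x) Us) (invo Q (\<psi> x))"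
      unfolding Us_def
    proof (rule cmp_hsup_le[OF X X ox hp[OF x] Mh ipsx])
      fix a assume "a \<in> (\<lambda>y. cmp Q (m y) (m' y)) ` cob A"
      then obtain y where y: "y \<in> cob A" and a: "a = cmp Q (m y) (m' y)" by blast
      have oy: "cty A y \<in> Obj Q" using ty y by blast
      have e: "cmp Q (\<phi> x) a = cmp Q (cmp Q (\<phi> x) (m y)) (m' y)"
        unfolding a using assoc[OF X oy X ox mh'[OF y] mh[OF y] hp[OF x]] by simp
      have l1: "leq Q (cmp Q (\<phi> x) (m y)) (chom A x y)"
        by (rule trans2[where X="cty A y" and Y="cty A x", OF mono_l[OF oy X ox mh[OF y] hq[OF y] hp[OF x] ml1[OF y]] counit[OF x y]])
          (use ox oy X x y in \<open>auto intro: cmp_in hp hq hA mh\<close>)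
      have l2: "leq Q (cmp Q (cmp Q (\<phi> x) (m y)) (m' y)) (cmp Q (chom A x y) (invo Q (\<psi> y)))"
        by (rule mono2[OF X oy ox mh'[OF y] invo_in[OF oy X hq[OF y]] cmp_in[OF oy X ox mh[OF y] hp[OF x]] hA[OF y x] ml1'[OF y] l1])
      have e2: "cmp Q (chom A x y) (invo Q (\<psi> y)) = invo Q (cmp Q (\<psi> y) (chom A y x))"
        using invo_cmp[OF ox oy X hA[OF x y] hq[OF y]] sy[OF x y] by simp
      have l3: "leq Q (invo Q (cmp Q (\<psi> y) (chom A y x))) (invo Q (\<psi> x))"
        by (rule invo_mono[OF ox X cmp_in[OF ox oy X hA[OF x y] hq[OF y]] hq[OF x] qq[OF y x]])
      show "leq Q (cmp Q (\<phi> x) a) (invo Q (\<psi> x))"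
        unfolding e using l2 l3 unfolding e2
        by (rule trans2[where X=X and Y="cty A x"])
          (use ox oy X x y in \<open>auto intro: cmp_in hp hq hA mh' mh invo_in\<close>)
    qed
    ultimately show ?thesis
      by (metis trans2[where X=X and Y="cty A x"] ipsx cmp_in[OF X X ox Ush hp[OF x]] hp[OF x] ox X)
  qed
  have "leq Q (invo Q (\<phi> x)) (\<psi> x)"
    using invo_mono[OF X ox hp[OF x] ipsx b] invo_invo[OF ox X hq[OF x]] by simp
  then show ?thesis using antisym[OF ox X hq[OF x] ipx a] by blast
qed

lemma cc_hom:
  assumes A: "qcategory Q A" and S: "symmetric Q A"
    and xm: "(X, \<phi>) \<in> cob (cauchy_completion Q A)" and ym: "(Y, \<psi>) \<in> cob (cauchy_completion Q A)"
  shows "chom (cauchy_completion Q A) (Y, \<psi>) (X, \<phi>) =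
    hsup Q X Y ((\<lambda>y. cmp Q (invo Q (\<psi> y)) (\<phi> y)) ` cob A)"
proof -
  have Y: "Y \<in> Obj Q" and lp: "left_adjoint_presheaf Q A Y \<psi>"
    using ym unfolding cauchy_completion_def by auto
  obtain \<psi>' where r: "right_adjoint Q A Y \<psi> \<psi>'" using lp unfolding left_adjoint_presheaf_def by blast
  have pr: "presheaf Q A Y \<psi>" using lp unfolding left_adjoint_presheaf_def by blast
  have key: "hsup Q X Y ((\<lambda>y. cmp Q (\<psi>'' y) (\<phi> y)) ` cob A) =
      hsup Q X Y ((\<lambda>y. cmp Q (invo Q (\<psi> y)) (\<phi> y)) ` cob A)" if "right_adjoint Q A Y \<psi> \<psi>''" for \<psi>''
  proof -
    have "\<And>y. y \<in> cob A \<Longrightarrow> \<psi>'' y = invo Q (\<psi> y)" using adj_invo[OF A S Y pr that] by blast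
    then show ?thesis by (metis (no_types, lifting) image_cong)
  qed
  have "chom (cauchy_completion Q A) (Y, \<psi>) (X, \<phi>) = (THE h. \<exists>\<psi>'. right_adjoint Q A Y \<psi> \<psi>' \<and>
                 h = hsup Q X Y ((\<lambda>y. cmp Q (\<psi>' y) (\<phi> y)) ` cob A))"
    unfolding cauchy_completion_def by simp
  also have "\<dots> = hsup Q X Y ((\<lambda>y. cmp Q (invo Q (\<psi> y)) (\<phi> y)) ` cob A)"
  proof (rule the_equality)
    show "\<exists>\<psi>'. right_adjoint Q A Y \<psi> \<psi>' \<and> hsup Q X Y ((\<lambda>y. cmp Q (invo Q (\<psi> y)) (\<phi> y)) ` cob A) =
         hsup Q X Y ((\<lambda>y. cmp Q (\<psi>' y) (\<phi> y)) ` cob A)" using r key[OF r] by metis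
  next
    fix h assume "\<exists>\<psi>'. right_adjoint Q A Y \<psi> \<psi>' \<and> h = hsup Q X Y ((\<lambda>y. cmp Q (\<psi>' y) (\<phi> y)) ` cob A)"
    then show "h = hsup Q X Y ((\<lambda>y. cmp Q (invo Q (\<psi> y)) (\<phi> y)) ` cob A)" using key by metis
  qed
  finally show ?thesis .
qed

lemma part1:
  assumes A: "qcategory Q A" and S: "symmetric Q A"
  shows "symmetric Q (cauchy_completion Q A)"
  unfolding symmetric_def
proof (intro ballI)
  fix x y assume x: "x \<in> cob (cauchy_completion Q A)" and y: "y \<in> cob (cauchy_completion Q A)"
  obtain X \<phi> where xe: "x = (X, \<phi>)" by fastforce
  obtain Y \<psi> where ye: "y = (Y, \<psi>)" by fastforce
  have X: "X \<in> Obj Q" and Y: "Y \<in> Obj Q" and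
    px: "presheaf Q A X \<phi>" and py: "presheaf Q A Y \<psi>"
    using x y unfolding xe ye cauchy_completion_def left_adjoint_presheaf_def by auto
  note ty = qc_facts(1)[OF A]
  have hp: "\<And>z. z \<in> cob A \<Longrightarrow> \<phi> z \<in> Hom Q X (cty A z)" using px unfolding presheaf_def by blast
  have hq: "\<And>z. z \<in> cob A \<Longrightarrow> \<psi> z \<in> Hom Q Y (cty A z)" using py unfolding presheaf_def by blast
  have Sh: "(\<lambda>z. cmp Q (invo Q (\<psi> z)) (\<phi> z)) ` cob A \<subseteq> Hom Q X Y"
    using cmp_in[OF X _ Y hp invo_in[OF Y _ hq]] ty by blast
  have im: "invo Q ` ((\<lambda>z. cmp Q (invo Q (\<psi> z)) (\<phi> z)) ` cob A) = (\<lambda>z. cmp Q (invo Q (\<phi> z)) (\<psi> z)) ` cob A"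
    unfolding image_image
  proof (rule image_cong[OF HOL.refl])
    fix z assume z: "z \<in> cob A"
    show "invo Q (cmp Q (invo Q (\<psi> z)) (\<phi> z)) = cmp Q (invo Q (\<phi> z)) (\<psi> z)"
      using invo_cmp[OF X ty[OF z] Y hp[OF z] invo_in[OF Y ty[OF z] hq[OF z]]] invo_invo[OF Y ty[OF z] hq[OF z]]
      by simp
  qed
  show "chom (cauchy_completion Q A) x y = invo Q (chom (cauchy_completion Q A) y x)"
    unfolding xe ye cc_hom[OF A S x[unfolded xe] y[unfolded ye]] cc_hom[OF A S y[unfolded ye] x[unfolded xe]]
      invo_hsup[OF X Y Sh] im ..
qed

lemma symz_simps: "cob (symmetrisation Q C) = cob C" "cty (symmetrisation Q C) = cty C"
  "chom (symmetrisation Q C) y x = hmeet Q (cty C x) (cty C y) (chom C y x) (invo Q (chom C x y))"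
  unfolding symmetrisation_def by simp_all

lemma qcat_symz: assumes C: "qcategory Q C" shows "qcategory Q (symmetrisation Q C)"
proof -
  note ty = qc_facts(1)[OF C] and hC = qc_facts(2)[OF C] and cC = qc_facts(3)[OF C] and iC = qc_facts(4)[OF C]
  have comp: "leq Q (cmp Q (hmeet Q (cty C y) (cty C z) (chom C z y) (invo Q (chom C y z)))
                            (hmeet Q (cty C x) (cty C y) (chom C y x) (invo Q (chom C x y))))
                    (hmeet Q (cty C x) (cty C z) (chom C z x) (invo Q (chom C x z)))"
    if x: "x \<in> cob C" and y: "y \<in> cob C" and z: "z \<in> cob C" for x y z
  proof -
    have ox: "cty C x \<in> Obj Q" and oy: "cty C y \<in> Obj Q" and oz: "cty C z \<in> Obj Q" using ty x y z by auto
    define a where "a = hmeet Q (cty C y) (cty C z) (chom C z y) (invo Q (chom C y z))"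
    define b where "b = hmeet Q (cty C x) (cty C y) (chom C y x) (invo Q (chom C x y))"
    have ah: "a \<in> Hom Q (cty C y) (cty C z)" unfolding a_def using hmeet_in oy oz by blast
    have bh: "b \<in> Hom Q (cty C x) (cty C y)" unfolding b_def using hmeet_in ox oy by blast
    have abh: "cmp Q a b \<in> Hom Q (cty C x) (cty C z)" using cmp_in[OF ox oy oz bh ah] .
    have 1: "leq Q (cmp Q a b) (chom C z x)"
      by (rule trans2[where X="cty C x" and Y="cty C z", OF mono2[OF ox oy oz bh hC[OF x y] ah hC[OF y z]] cC[OF x y z]])
        (use a_def b_def hmeet_le1 hC ox oy oz x y z abh in \<open>auto intro: cmp_in\<close>)
    have e: "cmp Q (invo Q (chom C y z)) (invo Q (chom C x y)) = invo Q (cmp Q (chom C x y) (chom C y z))"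
      using invo_cmp[OF oz oy ox hC[OF z y] hC[OF y x]] by simp
    have 2: "leq Q (cmp Q a b) (invo Q (chom C x z))"
    proof (rule trans2[where X="cty C x" and Y="cty C z"])
      show "leq Q (cmp Q a b) (cmp Q (invo Q (chom C y z)) (invo Q (chom C x y)))"
        by (rule mono2[OF ox oy oz bh invo_in[OF oy ox hC[OF y x]] ah invo_in[OF oz oy hC[OF z y]]])
          (use a_def b_def hmeet_le2 hC ox oy oz x y z invo_in in \<open>blast+\<close>)
      show "leq Q (cmp Q (invo Q (chom C y z)) (invo Q (chom C x y))) (invo Q (chom C x z))"
        unfolding e by (rule invo_mono[OF oz ox cmp_in[OF oz oy ox hC[OF z y] hC[OF y x]] hC[OF z x] cC[OF z y x]])
    qed (use abh ox oz x z invo_in[OF oz ox hC[OF z x]] cmp_in[OF ox oy oz invo_in[OF oy ox hC[OF y x]] invo_in[OF oz oy hC[OF z y]]] in auto)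
    show ?thesis unfolding a_def[symmetric] b_def[symmetric]
      by (rule hmeet_greatest[OF ox oz abh 1 2])
  qed
  show ?thesis unfolding qcategory_def symz_simps
  proof (intro conjI ballI)
    fix x assume x: "x \<in> cob C"
    then show "cty C x \<in> Obj Q" using ty by blast
    have ox: "cty C x \<in> Obj Q" using ty x by blast
    show "leq Q (idm Q (cty C x)) (hmeet Q (cty C x) (cty C x) (chom C x x) (invo Q (chom C x x)))"
      by (rule hmeet_greatest[OF ox ox idm_in[OF ox] iC[OF x]])
        (use invo_mono[OF ox ox idm_in[OF ox] hC[OF x x] iC[OF x]] invo_idm[OF ox] in simp)
  next
    fix x y assume "x \<in> cob C" "y \<in> cob C"
    then show "hmeet Q (cty C x) (cty C y) (chom C y x) (invo Q (chom C x y)) \<in> Hom Q (cty C x) (cty C y)"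
      using hmeet_in ty by blast
  next
    fix x y z assume "x \<in> cob C" "y \<in> cob C" "z \<in> cob C"
    then show "leq Q (cmp Q (hmeet Q (cty C y) (cty C z) (chom C z y) (invo Q (chom C y z)))
                            (hmeet Q (cty C x) (cty C y) (chom C y x) (invo Q (chom C x y))))
                    (hmeet Q (cty C x) (cty C z) (chom C z x) (invo Q (chom C x z)))" by (rule comp)
  qed
qed

lemma sym_symz: assumes C: "qcategory Q C" shows "symmetric Q (symmetrisation Q C)"
  unfolding symmetric_def symz_simps
proof (intro ballI)
  fix x y assume x: "x \<in> cob C" and y: "y \<in> cob C"
  note ty = qc_facts(1)[OF C] and hC = qc_facts(2)[OF C]
  have ox: "cty C x \<in> Obj Q" and oy: "cty C y \<in> Obj Q" using ty x y by auto
  show "hmeet Q (cty C y) (cty C x) (chom C x y) (invo Q (chom C y x)) =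
        invo Q (hmeet Q (cty C x) (cty C y) (chom C y x) (invo Q (chom C x y)))"
    using invo_hmeet[OF ox oy hC[OF x y] invo_in[OF oy ox hC[OF y x]]] invo_invo[OF oy ox hC[OF y x]] hmeet_comm
    by simp
qed

lemma part2:
  assumes C: "qcategory Q C" and CC: "cauchy_complete Q C"
  shows "cauchy_complete Q (symmetrisation Q C)"
proof -
  define Cs where "Cs = symmetrisation Q C"
  have cobs: "cob Cs = cob C" and ctys: "cty Cs = cty C" unfolding Cs_def symz_simps by auto
  have qCs: "qcategory Q Cs" unfolding Cs_def by (rule qcat_symz[OF C])
  have sCs: "symmetric Q Cs" unfolding Cs_def by (rule sym_symz[OF C])
  note ty = qc_facts(1)[OF C] and hC = qc_facts(2)[OF C] and cC = qc_facts(3)[OF C] and iC = qc_facts(4)[OF C]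
  note hS = qc_facts(2)[OF qCs, unfolded cobs ctys] and cS = qc_facts(3)[OF qCs, unfolded cobs ctys]
  have chs: "chom Cs y x = hmeet Q (cty C x) (cty C y) (chom C y x) (invo Q (chom C x y))" for x y
    unfolding Cs_def symz_simps ..
  have leC: "leq Q (chom Cs y x) (chom C y x)" if "x \<in> cob C" "y \<in> cob C" for x y
    unfolding chs by (rule hmeet_le1[OF ty[OF that(1)] ty[OF that(2)] hC[OF that]])
  have leI: "leq Q (chom Cs y x) (invo Q (chom C x y))" if "x \<in> cob C" "y \<in> cob C" for x y
    unfolding chs by (rule hmeet_le2[OF ty[OF that(1)] ty[OF that(2)] invo_in[OF ty[OF that(2)] ty[OF that(1)] hC[OF that(2,1)]]])
  have syS: "chom Cs x y = invo Q (chom Cs y x)" if "x \<in> cob C" "y \<in> cob C" for x y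
    using sCs that unfolding symmetric_def cobs by blast
  show ?thesis
    unfolding cauchy_complete_def Cs_def[symmetric]
  proof (intro ballI allI impI)
    fix X \<phi> assume X: "X \<in> Obj Q" and L: "left_adjoint_presheaf Q Cs X \<phi>"
    have P: "presheaf Q Cs X \<phi>" using L unfolding left_adjoint_presheaf_def by blast
    obtain \<psi> where R: "right_adjoint Q Cs X \<phi> \<psi>" using L unfolding left_adjoint_presheaf_def by blast
    have inv: "\<psi> y = invo Q (\<phi> y)" if "y \<in> cob C" for y
      using adj_invo[OF qCs sCs X P R] that cobs by blast
    have hp: "\<And>y. y \<in> cob C \<Longrightarrow> \<phi> y \<in> Hom Q X (cty C y)" using P unfolding presheaf_def cobs ctys by blast
    have pp: "\<And>y y'. y \<in> cob C \<Longrightarrow> y' \<in> cob C \<Longrightarrow> leq Q (cmp Q (chom Cs y' y) (\<phi> y)) (\<phi> y')"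
      using P unfolding presheaf_def cobs by blast
    have hq: "\<And>y. y \<in> cob C \<Longrightarrow> \<psi> y \<in> Hom Q (cty C y) X"
      using R unfolding right_adjoint_def copresheaf_def cobs ctys by blast
    have unit: "leq Q (idm Q X) (hsup Q X X ((\<lambda>y. cmp Q (\<psi> y) (\<phi> y)) ` cob C))"
      using R unfolding right_adjoint_def cobs by blast
    have counit: "\<And>y y'. y \<in> cob C \<Longrightarrow> y' \<in> cob C \<Longrightarrow> leq Q (cmp Q (\<phi> y) (\<psi> y')) (chom Cs y y')"
      using R unfolding right_adjoint_def cobs by blast
    define \<phi>' where "\<phi>' z = hsup Q X (cty C z) ((\<lambda>y. cmp Q (chom C z y) (\<phi> y)) ` cob C)" for z
    define \<psi>' where "\<psi>' z = hsup Q (cty C z) X ((\<lambda>y. cmp Q (\<psi> y) (chom C y z)) ` cob C)" for z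
    have S\<phi>: "(\<lambda>y. cmp Q (chom C z y) (\<phi> y)) ` cob C \<subseteq> Hom Q X (cty C z)" if "z \<in> cob C" for z
    proof -
      { fix y assume y: "y \<in> cob C"
        have "cmp Q (chom C z y) (\<phi> y) \<in> Hom Q X (cty C z)"
          using cmp_in[OF X ty[OF y] ty[OF that] hp[OF y] hC[OF y that]] . }
      then show ?thesis by blast
    qed
    have S\<psi>: "(\<lambda>y. cmp Q (\<psi> y) (chom C y z)) ` cob C \<subseteq> Hom Q (cty C z) X" if "z \<in> cob C" for z
    proof -
      { fix y assume y: "y \<in> cob C"
        have "cmp Q (\<psi> y) (chom C y z) \<in> Hom Q (cty C z) X"
          using cmp_in[OF ty[OF that] ty[OF y] X hC[OF that y] hq[OF y]] . }
      then show ?thesis by blast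
    qed
    have h\<phi>': "\<phi>' z \<in> Hom Q X (cty C z)" if "z \<in> cob C" for z
      unfolding \<phi>'_def using hsup_in[OF X ty[OF that] S\<phi>[OF that]] .
    have h\<psi>': "\<psi>' z \<in> Hom Q (cty C z) X" if "z \<in> cob C" for z
      unfolding \<psi>'_def using hsup_in[OF ty[OF that] X S\<psi>[OF that]] .
    have \<phi>le: "leq Q (\<phi> y) (\<phi>' y)" if y: "y \<in> cob C" for y
    proof -
      have oy: "cty C y \<in> Obj Q" using ty y by blast
      have "\<phi> y = cmp Q (idm Q (cty C y)) (\<phi> y)" using idl[OF X oy hp[OF y]] by simp
      moreover have "leq Q (cmp Q (idm Q (cty C y)) (\<phi> y)) (cmp Q (chom C y y) (\<phi> y))"
        by (rule mono_r[OF X oy oy idm_in[OF oy] hC[OF y y] hp[OF y] iC[OF y]])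
      moreover have "leq Q (cmp Q (chom C y y) (\<phi> y)) (\<phi>' y)"
        unfolding \<phi>'_def by (rule hsup_upper[OF X oy S\<phi>[OF y]]) (use y in blast)
      ultimately show ?thesis
        using trans2[where X=X and Y="cty C y"] hp[OF y] h\<phi>'[OF y] cmp_in[OF X oy oy hp[OF y] hC[OF y y]]
          X oy by metis
    qed
    have \<psi>le: "leq Q (\<psi> y) (\<psi>' y)" if y: "y \<in> cob C" for y
    proof -
      have oy: "cty C y \<in> Obj Q" using ty y by blast
      have "\<psi> y = cmp Q (\<psi> y) (idm Q (cty C y))" using idr[OF oy X hq[OF y]] by simp
      moreover have "leq Q (cmp Q (\<psi> y) (idm Q (cty C y))) (cmp Q (\<psi> y) (chom C y y))"
        by (rule mono_l[OF oy oy X idm_in[OF oy] hC[OF y y] hq[OF y] iC[OF y]])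
      moreover have "leq Q (cmp Q (\<psi> y) (chom C y y)) (\<psi>' y)"
        unfolding \<psi>'_def by (rule hsup_upper[OF oy X S\<psi>[OF y]]) (use y in blast)
      ultimately show ?thesis
        using trans2[where X="cty C y" and Y=X] hq[OF y] h\<psi>'[OF y] cmp_in[OF oy oy X hC[OF y y] hq[OF y]]
          X oy by metis
    qed
    have P': "presheaf Q C X \<phi>'"
      unfolding presheaf_def
    proof (intro conjI ballI)
      fix y assume y: "y \<in> cob C"
      show "\<phi>' y \<in> Hom Q X (cty C y)" using h\<phi>'[OF y] .
      show "leq Q (cmp Q (\<phi>' y) (idm Q X)) (\<phi>' y)"
        using idr[OF X ty[OF y] h\<phi>'[OF y]] refl[OF X ty[OF y] h\<phi>'[OF y]] by simp
    next
      fix y y' assume y: "y \<in> cob C" and y': "y' \<in> cob C"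
      have oy: "cty C y \<in> Obj Q" and oy': "cty C y' \<in> Obj Q" using ty y y' by auto
      show "leq Q (cmp Q (chom C y' y) (\<phi>' y)) (\<phi>' y')"
        unfolding \<phi>'_def[of y]
      proof (rule cmp_hsup_le[OF X oy oy' hC[OF y y'] S\<phi>[OF y] h\<phi>'[OF y']])
        fix b assume "b \<in> (\<lambda>w. cmp Q (chom C y w) (\<phi> w)) ` cob C"
        then obtain w where w: "w \<in> cob C" and b: "b = cmp Q (chom C y w) (\<phi> w)" by blast
        have ow: "cty C w \<in> Obj Q" using ty w by blast
        have e: "cmp Q (chom C y' y) b = cmp Q (cmp Q (chom C y' y) (chom C y w)) (\<phi> w)"
          unfolding b using assoc[OF X ow oy oy' hp[OF w] hC[OF w y] hC[OF y y']] .
        have 1: "leq Q (cmp Q (cmp Q (chom C y' y) (chom C y w)) (\<phi> w)) (cmp Q (chom C y' w) (\<phi> w))"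
          by (rule mono_r[OF X ow oy' cmp_in[OF ow oy oy' hC[OF w y] hC[OF y y']] hC[OF w y'] hp[OF w] cC[OF w y y']])
        have 2: "leq Q (cmp Q (chom C y' w) (\<phi> w)) (\<phi>' y')"
          unfolding \<phi>'_def by (rule hsup_upper[OF X oy' S\<phi>[OF y']]) (use w in blast)
        show "leq Q (cmp Q (chom C y' y) b) (\<phi>' y')" unfolding e
          by (rule trans2[OF 1 2 X oy' cmp_in[OF X ow oy' hp[OF w] cmp_in[OF ow oy oy' hC[OF w y] hC[OF y y']]]
                 cmp_in[OF X ow oy' hp[OF w] hC[OF w y']] h\<phi>'[OF y']])
      qed
    qed
    have CP': "copresheaf Q C X \<psi>'"
      unfolding copresheaf_def
    proof (intro conjI ballI)
      fix y assume y: "y \<in> cob C"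
      show "\<psi>' y \<in> Hom Q (cty C y) X" using h\<psi>'[OF y] .
      show "leq Q (cmp Q (idm Q X) (\<psi>' y)) (\<psi>' y)"
        using idl[OF ty[OF y] X h\<psi>'[OF y]] refl[OF ty[OF y] X h\<psi>'[OF y]] by simp
    next
      fix y y' assume y: "y \<in> cob C" and y': "y' \<in> cob C"
      have oy: "cty C y \<in> Obj Q" and oy': "cty C y' \<in> Obj Q" using ty y y' by auto
      show "leq Q (cmp Q (\<psi>' y) (chom C y y')) (\<psi>' y')"
        unfolding \<psi>'_def[of y]
      proof (rule hsup_cmp_le[OF oy' oy X hC[OF y' y] S\<psi>[OF y] h\<psi>'[OF y']])
        fix b assume "b \<in> (\<lambda>w. cmp Q (\<psi> w) (chom C w y)) ` cob C"
        then obtain w where w: "w \<in> cob C" and b: "b = cmp Q (\<psi> w) (chom C w y)" by blast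
        have ow: "cty C w \<in> Obj Q" using ty w by blast
        have e: "cmp Q b (chom C y y') = cmp Q (\<psi> w) (cmp Q (chom C w y) (chom C y y'))"
          unfolding b using assoc[OF oy' oy ow X hC[OF y' y] hC[OF y w] hq[OF w]] by simp
        have 1: "leq Q (cmp Q (\<psi> w) (cmp Q (chom C w y) (chom C y y'))) (cmp Q (\<psi> w) (chom C w y'))"
          by (rule mono_l[OF oy' ow X cmp_in[OF oy' oy ow hC[OF y' y] hC[OF y w]] hC[OF y' w] hq[OF w] cC[OF y' y w]])
        have 2: "leq Q (cmp Q (\<psi> w) (chom C w y')) (\<psi>' y')"
          unfolding \<psi>'_def by (rule hsup_upper[OF oy' X S\<psi>[OF y']]) (use w in blast)
        show "leq Q (cmp Q b (chom C y y')) (\<psi>' y')" unfolding e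
          by (rule trans2[OF 1 2 oy' X cmp_in[OF oy' ow X cmp_in[OF oy' oy ow hC[OF y' y] hC[OF y w]] hq[OF w]]
                 cmp_in[OF oy' ow X hC[OF y' w] hq[OF w]] h\<psi>'[OF y']])
      qed
    qed
    have SU: "(\<lambda>y. cmp Q (\<psi> y) (\<phi> y)) ` cob C \<subseteq> Hom Q X X"
      using cmp_in[OF X ty X hp hq] by blast
    have SU': "(\<lambda>y. cmp Q (\<psi>' y) (\<phi>' y)) ` cob C \<subseteq> Hom Q X X"
      using cmp_in[OF X ty X h\<phi>' h\<psi>'] by blast
    have unit': "leq Q (idm Q X) (hsup Q X X ((\<lambda>y. cmp Q (\<psi>' y) (\<phi>' y)) ` cob C))"
    proof (rule trans2[OF unit _ X X idm_in[OF X] hsup_in[OF X X SU] hsup_in[OF X X SU']])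
      show "leq Q (hsup Q X X ((\<lambda>y. cmp Q (\<psi> y) (\<phi> y)) ` cob C)) (hsup Q X X ((\<lambda>y. cmp Q (\<psi>' y) (\<phi>' y)) ` cob C))"
      proof (rule hsup_least[OF X X SU hsup_in[OF X X SU']])
        fix b assume "b \<in> (\<lambda>y. cmp Q (\<psi> y) (\<phi> y)) ` cob C"
        then obtain y where y: "y \<in> cob C" and b: "b = cmp Q (\<psi> y) (\<phi> y)" by blast
        have "leq Q (cmp Q (\<psi> y) (\<phi> y)) (cmp Q (\<psi>' y) (\<phi>' y))"
          by (rule mono2[OF X ty[OF y] X hp[OF y] h\<phi>'[OF y] hq[OF y] h\<psi>'[OF y] \<phi>le[OF y] \<psi>le[OF y]])
        moreover have "leq Q (cmp Q (\<psi>' y) (\<phi>' y)) (hsup Q X X ((\<lambda>y. cmp Q (\<psi>' y) (\<phi>' y)) ` cob C))"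
          by (rule hsup_upper[OF X X SU']) (use y in blast)
        ultimately show "leq Q b (hsup Q X X ((\<lambda>y. cmp Q (\<psi>' y) (\<phi>' y)) ` cob C))"
          unfolding b by (rule trans2[OF _ _ X X cmp_in[OF X ty[OF y] X hp[OF y] hq[OF y]]
               cmp_in[OF X ty[OF y] X h\<phi>'[OF y] h\<psi>'[OF y]] hsup_in[OF X X SU']])
      qed
    qed
    have inner: "leq Q (cmp Q (\<phi> y) (\<psi>' z')) (chom C y z')" if y: "y \<in> cob C" and z': "z' \<in> cob C" for y z'
    proof -
      have oy: "cty C y \<in> Obj Q" and oz': "cty C z' \<in> Obj Q" using ty y z' by auto
      show ?thesis unfolding \<psi>'_def
      proof (rule cmp_hsup_le[OF oz' X oy hp[OF y] S\<psi>[OF z'] hC[OF z' y]])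
        fix b assume "b \<in> (\<lambda>w. cmp Q (\<psi> w) (chom C w z')) ` cob C"
        then obtain w where w: "w \<in> cob C" and b: "b = cmp Q (\<psi> w) (chom C w z')" by blast
        have ow: "cty C w \<in> Obj Q" using ty w by blast
        have e: "cmp Q (\<phi> y) b = cmp Q (cmp Q (\<phi> y) (\<psi> w)) (chom C w z')"
          unfolding b using assoc[OF oz' ow X oy hC[OF z' w] hq[OF w] hp[OF y]] .
        have c: "leq Q (cmp Q (\<phi> y) (\<psi> w)) (chom C y w)"
          by (rule trans2[OF counit[OF y w] leC[OF w y] ow oy cmp_in[OF ow X oy hq[OF w] hp[OF y]]
                hS[OF w y] hC[OF w y]])
        have 1: "leq Q (cmp Q (cmp Q (\<phi> y) (\<psi> w)) (chom C w z')) (cmp Q (chom C y w) (chom C w z'))"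
          by (rule mono_r[OF oz' ow oy cmp_in[OF ow X oy hq[OF w] hp[OF y]] hC[OF w y] hC[OF z' w] c])
        show "leq Q (cmp Q (\<phi> y) b) (chom C y z')" unfolding e
          by (rule trans2[OF 1 cC[OF z' w y] oz' oy cmp_in[OF oz' ow oy hC[OF z' w] cmp_in[OF ow X oy hq[OF w] hp[OF y]]]
                cmp_in[OF oz' ow oy hC[OF z' w] hC[OF w y]] hC[OF z' y]])
      qed
    qed
    have counit': "leq Q (cmp Q (\<phi>' z) (\<psi>' z')) (chom C z z')" if z: "z \<in> cob C" and z': "z' \<in> cob C" for z z'
    proof -
      have oz: "cty C z \<in> Obj Q" and oz': "cty C z' \<in> Obj Q" using ty z z' by auto
      show ?thesis unfolding \<phi>'_def[of z]
      proof (rule hsup_cmp_le[OF oz' X oz h\<psi>'[OF z'] S\<phi>[OF z] hC[OF z' z]])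
        fix b assume "b \<in> (\<lambda>y. cmp Q (chom C z y) (\<phi> y)) ` cob C"
        then obtain y where y: "y \<in> cob C" and b: "b = cmp Q (chom C z y) (\<phi> y)" by blast
        have oy: "cty C y \<in> Obj Q" using ty y by blast
        have e: "cmp Q b (\<psi>' z') = cmp Q (chom C z y) (cmp Q (\<phi> y) (\<psi>' z'))"
          unfolding b using assoc[OF oz' X oy oz h\<psi>'[OF z'] hp[OF y] hC[OF y z]] by simp
        have 1: "leq Q (cmp Q (chom C z y) (cmp Q (\<phi> y) (\<psi>' z'))) (cmp Q (chom C z y) (chom C y z'))"
          by (rule mono_l[OF oz' oy oz cmp_in[OF oz' X oy h\<psi>'[OF z'] hp[OF y]] hC[OF z' y] hC[OF y z] inner[OF y z']])
        show "leq Q (cmp Q b (\<psi>' z')) (chom C z z')" unfolding e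
          by (rule trans2[OF 1 cC[OF z' y z] oz' oz cmp_in[OF oz' oy oz cmp_in[OF oz' X oy h\<psi>'[OF z'] hp[OF y]] hC[OF y z]]
                cmp_in[OF oz' oy oz hC[OF z' y] hC[OF y z]] hC[OF z' z]])
      qed
    qed
    have L': "left_adjoint_presheaf Q C X \<phi>'"
      unfolding left_adjoint_presheaf_def right_adjoint_def using P' CP' unit' counit' by blast
    obtain a where a: "a \<in> cob C" and ta: "cty C a = X" and rep: "\<And>y. y \<in> cob C \<Longrightarrow> \<phi>' y = chom C y a"
      using CC X L' unfolding cauchy_complete_def by blast
    have hCaa: "chom C a a \<in> Hom Q X X" using hC[OF a a] ta by simp
    have iCa: "leq Q (idm Q X) (chom C a a)" using iC[OF a] ta by simp
    have hCya: "chom C y a \<in> Hom Q X (cty C y)" if "y \<in> cob C" for y using hC[OF a that] ta by simp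
    have hCay: "chom C a y \<in> Hom Q (cty C y) X" if "y \<in> cob C" for y using hC[OF that a] ta by simp
    have hSya: "chom Cs y a \<in> Hom Q X (cty C y)" if "y \<in> cob C" for y using hS[OF a that] ta by simp
    have hSay: "chom Cs a y \<in> Hom Q (cty C y) X" if "y \<in> cob C" for y using hS[OF that a] ta by simp
    have \<psi>'le: "leq Q (\<psi>' y) (chom C a y)" if y: "y \<in> cob C" for y
    proof -
      have oy: "cty C y \<in> Obj Q" using ty y by blast
      have "\<psi>' y = cmp Q (idm Q X) (\<psi>' y)" using idl[OF oy X h\<psi>'[OF y]] by simp
      moreover have "leq Q (cmp Q (idm Q X) (\<psi>' y)) (cmp Q (chom C a a) (\<psi>' y))"
        by (rule mono_r[OF oy X X idm_in[OF X] hCaa h\<psi>'[OF y] iCa])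
      moreover have "leq Q (cmp Q (chom C a a) (\<psi>' y)) (chom C a y)"
        using counit'[OF a y] rep[OF a] by simp
      ultimately show ?thesis
        using trans2[where X="cty C y" and Y=X] h\<psi>'[OF y] hCay[OF y] cmp_in[OF oy X X h\<psi>'[OF y] hCaa]
          X oy by metis
    qed
    have le1: "leq Q (\<phi> y) (chom Cs y a)" if y: "y \<in> cob C" for y
    proof -
      have oy: "cty C y \<in> Obj Q" using ty y by blast
      have 1: "leq Q (\<phi> y) (chom C y a)" using \<phi>le[OF y] rep[OF y] by simp
      have "leq Q (\<psi> y) (chom C a y)"
        by (rule trans2[OF \<psi>le[OF y] \<psi>'le[OF y] oy X hq[OF y] h\<psi>'[OF y] hCay[OF y]])
      then have "leq Q (invo Q (\<psi> y)) (invo Q (chom C a y))"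
        by (rule invo_mono[OF oy X hq[OF y] hCay[OF y]])
      then have 2: "leq Q (\<phi> y) (invo Q (chom C a y))"
        using inv[OF y] invo_invo[OF X oy hp[OF y]] by simp
      show ?thesis unfolding chs ta by (rule hmeet_greatest[OF X oy hp[OF y] 1 2])
    qed
    have le2: "leq Q (chom Cs y a) (\<phi> y)" if y: "y \<in> cob C" for y
    proof -
      have oy: "cty C y \<in> Obj Q" using ty y by blast
      define e where "e = chom Cs y a"
      have eh: "e \<in> Hom Q X (cty C y)" unfolding e_def using hSya[OF y] .
      have "e = cmp Q e (idm Q X)" using idr[OF X oy eh] by simp
      moreover have "leq Q (cmp Q e (idm Q X)) (cmp Q e (hsup Q X X ((\<lambda>y. cmp Q (\<psi> y) (\<phi> y)) ` cob C)))"
        by (rule mono_l[OF X X oy idm_in[OF X] hsup_in[OF X X SU] eh unit])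
      moreover have "leq Q (cmp Q e (hsup Q X X ((\<lambda>y. cmp Q (\<psi> y) (\<phi> y)) ` cob C))) (\<phi> y)"
      proof (rule cmp_hsup_le[OF X X oy eh SU hp[OF y]])
        fix b assume "b \<in> (\<lambda>y. cmp Q (\<psi> y) (\<phi> y)) ` cob C"
        then obtain z where z: "z \<in> cob C" and b: "b = cmp Q (\<psi> z) (\<phi> z)" by blast
        have oz: "cty C z \<in> Obj Q" using ty z by blast
        have eq: "cmp Q e b = cmp Q (cmp Q e (\<psi> z)) (\<phi> z)"
          unfolding b using assoc[OF X oz X oy hp[OF z] hq[OF z] eh] .
        have "leq Q (invo Q (\<phi> z)) (invo Q (chom Cs z a))"
          by (rule invo_mono[OF X oz hp[OF z] hSya[OF z] le1[OF z]])
        then have q: "leq Q (\<psi> z) (chom Cs a z)" using inv[OF z] syS[OF a z] by simp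
        have 1: "leq Q (cmp Q e (\<psi> z)) (cmp Q e (chom Cs a z))"
          by (rule mono_l[OF oz X oy hq[OF z] hSay[OF z] eh q])
        have 2: "leq Q (cmp Q e (chom Cs a z)) (chom Cs y z)"
          unfolding e_def by (rule cS[OF z a y])
        have 3: "leq Q (cmp Q e (\<psi> z)) (chom Cs y z)"
          by (rule trans2[OF 1 2 oz oy cmp_in[OF oz X oy hq[OF z] eh] cmp_in[OF oz X oy hSay[OF z] eh] hS[OF z y]])
        have 4: "leq Q (cmp Q (cmp Q e (\<psi> z)) (\<phi> z)) (cmp Q (chom Cs y z) (\<phi> z))"
          by (rule mono_r[OF X oz oy cmp_in[OF oz X oy hq[OF z] eh] hS[OF z y] hp[OF z] 3])
        show "leq Q (cmp Q e b) (\<phi> y)" unfolding eq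
          by (rule trans2[OF 4 pp[OF z y] X oy cmp_in[OF X oz oy hp[OF z] cmp_in[OF oz X oy hq[OF z] eh]]
               cmp_in[OF X oz oy hp[OF z] hS[OF z y]] hp[OF y]])
      qed
      ultimately show ?thesis unfolding e_def[symmetric]
        using trans2[where X=X and Y="cty C y"] eh hp[OF y] cmp_in[OF X X oy hsup_in[OF X X SU] eh] X oy by metis
    qed
    show "\<exists>a\<in>cob Cs. cty Cs a = X \<and> (\<forall>y\<in>cob Cs. \<phi> y = chom Cs y a)"
      unfolding cobs ctys
    proof (intro bexI conjI ballI)
      show "cty C a = X" by (rule ta)
      show "a \<in> cob C" by (rule a)
      fix y assume y: "y \<in> cob C"
      show "\<phi> y = chom Cs y a" by (rule antisym[OF X ty[OF y] hp[OF y] hSya[OF y] le1[OF y] le2[OF y]])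
    qed
  qed
qed

end

theorem corollary3p9:
  fixes Q :: "('o, 'm) qtld" and A :: "('a, 'o, 'm) qcat" and C :: "('c, 'o, 'm) qcat"
  assumes "cauchy_bilateral Q"
  shows "(qcategory Q A \<and> symmetric Q A \<longrightarrow> symmetric Q (cauchy_completion Q A)) \<and>
         (qcategory Q C \<and> cauchy_complete Q C \<longrightarrow> cauchy_complete Q (symmetrisation Q C))"
proof -
  interpret CB Q by (rule CB.intro[OF assms])
  show ?thesis using part1 part2 by blast
qed

end
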